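(* Let $m\geq 2$ be an integer and let $\delta(m)=\lceil\log_2(m/3)\rceil$. (i) If $y$ and $v$ are finite binary words such that $yvy$ is a factor of $\mathbf t$ and $|y|=m$, then $2^{\delta(m)}$ divides $|yv|$. (ii) There exist finite binary words $y,v$ such that $yvy$ is a factor of $\mathbf t$, $|y|=m$, and $2^{\delta(m)+1}$ does not divide $|yv|$.
   Context: The Thue–Morse word is the infinite binary word $\mathbf t=\mathbf t_1\mathbf t_2\mathbf t_3\cdots$ where $\mathbf t_i\in\{0,1\}$ has the same parity as the number of $1$'s in the binary expansion of $i-1$ (so $\mathbf t=0110100110010110\cdots$). A factor of $\mathbf t$ is a finite word of the form $\mathbf t_\alpha\mathbf t_{\alpha+1}\cdots\mathbf t_\beta$ (or the empty word). $|w|$ denotes the length of a word $w$; $v$ may be empty. *)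

theory Defs
  imports Complex_Main
begin

fun bitcount :: "nat \<Rightarrow> nat" where
  "bitcount n = (if n = 0 then 0 else n mod 2 + bitcount (n div 2))"

(* Thue-Morse word, 0-indexed: tm n = t_(n+1) = parity of bitcount n *)
definition tm :: "nat \<Rightarrow> nat" where
  "tm n = bitcount n mod 2"

(* w is a factor of t: w = t_(a+1) ... t_(a+|w|) for some a (includes empty word) *)
definition tm_factor :: "nat list \<Rightarrow> bool" where
  "tm_factor w \<longleftrightarrow> (\<exists>a. w = map tm [a..<a + length w])"

definition binary_word :: "nat list \<Rightarrow> bool" where
  "binary_word w \<longleftrightarrow> set w \<subseteq> {0, 1}"

(* delta(m) = ceiling(log_2(m/3)); nonnegative for m >= 2 *)
definition delta :: "nat \<Rightarrow> int" where
  "delta m = \<lceil>log 2 (real m / 3)\<rceil>"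

end

theory Submission
  imports Defs
begin

declare bitcount.simps[simp del]

lemma bitcount_0[simp]: "bitcount 0 = 0"
  by (subst bitcount.simps) simp

lemma bitcount_2x: "r < 2 \<Longrightarrow> bitcount (2*x + r) = bitcount x + r"
  by (subst bitcount.simps) auto

lemma tm_le1: "tm n \<le> 1"
  unfolding tm_def by simp

lemma tm01: "tm n \<in> {0,1}"
  using tm_le1[of n] by (cases "tm n") auto

lemma bin_map_tm: "binary_word (map tm xs)"
  unfolding binary_word_def set_map by (rule image_subsetI) (rule tm01)

lemma tm_even: "tm (2*n) = tm n"
  unfolding tm_def using bitcount_2x[of 0 n] by simp

lemma tm_odd: "tm (2*n+1) = 1 - tm n"
  unfolding tm_def using bitcount_2x[of 1 n] by (simp add: mod_Suc)

lemma tm_vals: "tm 2 = 1" "tm 3 = 0" "tm 4 = 1" "tm 11 = 1" "tm 12 = 0" "tm 13 = 1"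
proof -
  have t0: "tm 0 = 0" by (simp add: tm_def)
  have t1: "tm 1 = 1" using tm_odd[of 0] t0 by simp
  have t2: "tm 2 = 1" using tm_even[of 1] t1 by simp
  have t3: "tm 3 = 0" using tm_odd[of 1] t1 by simp
  have t5: "tm 5 = 0" using tm_odd[of 2] t2 by simp
  have t6: "tm 6 = 0" using tm_even[of 3] t3 by simp
  show "tm 2 = 1" "tm 3 = 0" by (fact t2, fact t3)
  show "tm 4 = 1" using tm_even[of 2] t2 by simp
  show "tm 11 = 1" using tm_odd[of 5] t5 by simp
  show "tm 12 = 0" using tm_even[of 6] t6 by simp
  show "tm 13 = 1" using tm_odd[of 6] t6 by simp
qed

lemma tm_2s: "s < 2 \<Longrightarrow> tm (2*n+s) = (if s = 0 then tm n else 1 - tm n)"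
  using tm_even tm_odd by (cases s) auto

lemma bitcount_pow: "i < 2^k \<Longrightarrow> bitcount (2^k*n + i) = bitcount n + bitcount i"
proof (induction k arbitrary: i)
  case 0 then show ?case by simp
next
  case (Suc k)
  have e: "2^Suc k*n + i = 2*(2^k*n + i div 2) + i mod 2" by simp
  have "i div 2 < 2^k" using Suc.prems by auto
  then have "bitcount (2*(2^k*n + i div 2) + i mod 2) = bitcount n + bitcount (i div 2) + i mod 2"
    using bitcount_2x[of "i mod 2" "2^k*n + i div 2"] Suc.IH by simp
  then have "bitcount (2^Suc k*n + i) = bitcount n + bitcount (i div 2) + i mod 2"
    by (simp only: e)
  moreover have "bitcount (i div 2) + i mod 2 = bitcount i"
    using bitcount_2x[of "i mod 2" "i div 2"] by simp
  ultimately show ?case by linarith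
qed

lemma tm_pow: "i < 2^k \<Longrightarrow> tm (2^k*n + i) = (tm n + tm i) mod 2"
  unfolding tm_def using bitcount_pow by (simp add: mod_add_eq)

lemma no_pair: "tm (2*e) = tm (2*e+1) \<Longrightarrow> False"
proof -
  assume "tm (2*e) = tm (2*e+1)"
  then have "tm e = 1 - tm e" by (simp only: tm_even tm_odd)
  then show False using tm_le1[of e] by arith
qed

lemma no_three: "tm d = tm (d+1) \<Longrightarrow> tm (d+1) = tm (d+2) \<Longrightarrow> False"
proof (cases "even d")
  case True
  then obtain e where e: "d = 2*e" by blast
  then show False if "tm d = tm (d+1)" using that no_pair[of e] by simp
next
  case False
  then obtain e where e: "d+1 = 2*e" by (metis dvd_def even_Suc Suc_eq_plus1)
  then have "d+2 = 2*e+1" by simp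
  then show False if "tm (d+1) = tm (d+2)" using that e no_pair[of e] by simp
qed

lemma helper: assumes "even a" "odd b" "\<forall>i<4. tm (a+i) = tm (b+i)" shows False
proof -
  obtain c where c: "a = 2*c" using assms by blast
  obtain d where d: "b = 2*d+1" using assms oddE by blast
  have h: "tm (a+i) = tm (b+i)" if "i<4" for i using assms that by blast
  have four: "(1::nat)<4" "(2::nat)<4" "(3::nat)<4" by simp_all
  have e0: "tm c = 1 - tm d" using h[of 0] c d tm_even[of c] tm_odd[of d] by simp
  have "a+1 = 2*c+1" "b+1 = 2*(d+1)" using c d by simp_all
  then have e1: "1 - tm c = tm (d+1)" using h[of 1] four by (metis tm_even tm_odd)
  have "a+2 = 2*(c+1)" "b+2 = 2*(d+1)+1" using c d by simp_all
  then have e2: "tm (c+1) = 1 - tm (d+1)" using h[of 2] four by (metis tm_even tm_odd)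
  have "a+3 = 2*(c+1)+1" "b+3 = 2*(d+2)" using c d by simp_all
  then have e3: "1 - tm (c+1) = tm (d+2)" using h[of 3] four by (metis tm_even tm_odd)
  have "tm d = tm (d+1)" using e0 e1 tm_le1[of c] tm_le1[of d] by linarith
  moreover have "tm (d+1) = tm (d+2)" using e2 e3 tm_le1[of "c+1"] tm_le1[of "d+1"] by linarith
  ultimately show False using no_three by blast
qed

lemma sync1: assumes "4 \<le> n" "\<forall>i<n. tm (a+i) = tm (b+i)" shows "a mod 2 = b mod 2"
proof -
  have h: "\<forall>i<4. tm (a+i) = tm (b+i)" "\<forall>i<4. tm (b+i) = tm (a+i)" using assms by auto
  show ?thesis
  proof (rule ccontr)
    assume "a mod 2 \<noteq> b mod 2"
    then have "(even a \<and> odd b) \<or> (even b \<and> odd a)" by (auto simp: even_iff_mod_2_eq_zero)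
    then show False using helper h by blast
  qed
qed

lemma sync: "3*2^k+1 \<le> n \<Longrightarrow> \<forall>i<n. tm (a+i) = tm (b+i) \<Longrightarrow> a mod 2^(k+1) = b mod 2^(k+1)"
proof (induction k arbitrary: a b n)
  case 0 then show ?case using sync1 by simp
next
  case (Suc k)
  have "1 \<le> (2::nat)^k" by simp
  then have "(2::nat) \<le> 2^Suc k" by simp
  then have "4 \<le> n" using Suc.prems(1) by linarith
  then have par: "a mod 2 = b mod 2" using sync1 Suc.prems by blast
  define s where "s = a mod 2"
  define c where "c = a div 2"
  define d where "d = b div 2"
  have a: "a = 2*c+s" by (simp add: s_def c_def)
  have b: "b = 2*d+s" using par by (simp add: s_def d_def)
  have s2: "s < 2" by (simp add: s_def)
  have "\<forall>j<(n+1) div 2. tm (c+j) = tm (d+j)"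
  proof (intro allI impI)
    fix j assume "j < (n+1) div 2"
    then have "2*j < n" by linarith
    then have "tm (a+2*j) = tm (b+2*j)" using Suc.prems(2) by blast
    moreover have "a + 2*j = 2*(c+j)+s" "b+2*j = 2*(d+j)+s" using a b by simp_all
    ultimately have X: "tm (2*(c+j)+s) = tm (2*(d+j)+s)" by simp
    show "tm (c+j) = tm (d+j)"
    proof (cases "s = 0")
      case True then show ?thesis using X tm_2s[OF s2, of "c+j"] tm_2s[OF s2, of "d+j"] by simp
    next
      case False
      then have "1 - tm (c+j) = 1 - tm (d+j)" using X tm_2s[OF s2, of "c+j"] tm_2s[OF s2, of "d+j"] by simp
      then show ?thesis using tm_le1[of "c+j"] tm_le1[of "d+j"] by arith
    qed
  qed
  moreover have "3*2^k+1 \<le> (n+1) div 2" using Suc.prems(1) by simp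
  ultimately have IH: "c mod 2^(k+1) = d mod 2^(k+1)" using Suc.IH by blast
  have "a mod (2*2^(k+1)) = 2*(c mod 2^(k+1)) + s"
    using mod_mult2_eq[of a 2 "2^(k+1)"] by (simp add: c_def s_def)
  moreover have "b mod (2*2^(k+1)) = 2*(d mod 2^(k+1)) + s"
    using mod_mult2_eq[of b 2 "2^(k+1)"] par by (simp add: d_def s_def)
  ultimately show ?case using IH by simp
qed

lemma map_tm_nth: "i < b - a \<Longrightarrow> map tm [a..<b] ! i = tm (a+i)" by simp

lemma delta_nonneg: assumes "m \<ge> 2" shows "delta m \<ge> 0"
proof -
  have "-1 < log 2 (real m / 3)"
    using assms by (subst less_log_iff) (auto simp: powr_minus)
  then show ?thesis unfolding delta_def by linarith
qed

lemma delta_upper: assumes "m \<ge> 2" shows "m \<le> 3*2^nat (delta m)"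
proof -
  have "log 2 (real m / 3) \<le> real_of_int (delta m)" unfolding delta_def by simp
  also have "\<dots> = real (nat (delta m))" using delta_nonneg[OF assms] by simp
  finally have "real m / 3 \<le> 2 powr real (nat (delta m))"
    using assms by (subst (asm) log_le_iff) auto
  then have "real m \<le> 3 * 2^nat (delta m)" by (simp add: powr_realpow)
  then show ?thesis by (metis of_nat_le_iff of_nat_mult of_nat_numeral of_nat_power)
qed

lemma delta_lower: assumes "m \<ge> 2" "nat (delta m) = Suc k" shows "3*2^k < m"
proof -
  have "real_of_int (delta m) - 1 < log 2 (real m / 3)" unfolding delta_def by linarith
  moreover have "real_of_int (delta m) - 1 = real k" using assms delta_nonneg[OF assms(1)] by simp
  ultimately have "real k < log 2 (real m / 3)" by simp
  then have "2 powr real k < real m / 3" using assms by (subst (asm) less_log_iff) auto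
  then have "3 * 2^k < real m" by (simp add: powr_realpow)
  then show ?thesis by (metis of_nat_less_iff of_nat_mult of_nat_numeral of_nat_power)
qed

theorem proposition1:
  fixes m :: nat
  assumes "m \<ge> 2"
  shows "(\<forall>y v. binary_word y \<and> binary_word v \<and> tm_factor (y @ v @ y) \<and> length y = m
            \<longrightarrow> (2::int) ^ nat (delta m) dvd int (length (y @ v)))
       \<and> (\<exists>y v. binary_word y \<and> binary_word v \<and> tm_factor (y @ v @ y) \<and> length y = m
            \<and> \<not> (2::int) ^ (nat (delta m) + 1) dvd int (length (y @ v)))"
proof
  show "\<forall>y v. binary_word y \<and> binary_word v \<and> tm_factor (y @ v @ y) \<and> length y = m
            \<longrightarrow> (2::int) ^ nat (delta m) dvd int (length (y @ v))"
  proof (intro allI impI)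
    fix y v assume H: "binary_word y \<and> binary_word v \<and> tm_factor (y @ v @ y) \<and> length y = m"
    then obtain a where a: "y @ v @ y = map tm [a..<a + length (y@v@y)]" unfolding tm_factor_def by blast
    define p where "p = length (y@v)"
    have eq: "\<forall>i<m. tm (a+i) = tm (a+p+i)"
    proof (intro allI impI)
      fix i assume i: "i < m"
      have "(y@v@y) ! i = y ! i" using i H by (simp add: nth_append)
      moreover have "(y@v@y) ! (p+i) = y ! i" using i H by (simp add: nth_append p_def)
      moreover have "(y@v@y) ! i = tm (a+i)" using i H by (subst a) simp
      moreover have "(y@v@y) ! (p+i) = tm (a+(p+i))" using i H by (subst a) (simp add: p_def)
      ultimately show "tm (a+i) = tm (a+p+i)" by (simp add: add.assoc)
    qed
    show "(2::int) ^ nat (delta m) dvd int (length (y @ v))"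
    proof (cases "nat (delta m)")
      case 0 then show ?thesis by simp
    next
      case (Suc k)
      have "3*2^k+1 \<le> m" using delta_lower[OF assms Suc] by simp
      then have "a mod 2^(k+1) = (a+p) mod 2^(k+1)" using sync eq by blast
      then have "(2::nat)^(k+1) dvd p" using mod_eq_dvd_iff_nat[of a "a+p" "2^(k+1)"] by simp
      then have "int ((2::nat)^(k+1)) dvd int p" by (simp only: of_nat_dvd_iff)
      then show ?thesis using Suc by (simp add: p_def)
    qed
  qed
next
  define K where "K = nat (delta m)"
  define a :: nat where "a = 2^K*2"
  define p :: nat where "p = 9*2^K"
  have mK: "m \<le> 3*2^K" using delta_upper[OF assms] by (simp add: K_def)
  have per: "tm (a+i) = tm (a+p+i)" if "i < 3*2^K" for i
  proof -
    define q where "q = i div 2^K"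
    define r where "r = i mod 2^K"
    have r: "r < 2^K" by (simp add: r_def)
    have q: "q < 3" using that by (simp add: q_def less_mult_imp_div_less)
    have E1: "a + i = 2^K*(2+q) + r" by (simp add: a_def q_def r_def algebra_simps)
    have E2: "a + p + i = 2^K*(11+q) + r" by (simp add: a_def p_def q_def r_def algebra_simps)
    have E3: "tm (2+q) = tm (11+q)"
    proof -
      have "q = 0 \<or> q = 1 \<or> q = 2" using q by auto
      moreover have "q = 0 \<Longrightarrow> 2+q = 2 \<and> 11+q = 11" by simp
      moreover have "q = 1 \<Longrightarrow> 2+q = 3 \<and> 11+q = 12" by simp
      moreover have "q = 2 \<Longrightarrow> 2+q = 4 \<and> 11+q = 13" by simp
      ultimately show ?thesis using tm_vals by metis
    qed
    have "tm (a+i) = (tm (2+q) + tm r) mod 2" unfolding E1 by (rule tm_pow[OF r])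
    moreover have "tm (a+p+i) = (tm (11+q) + tm r) mod 2" unfolding E2 by (rule tm_pow[OF r])
    ultimately show ?thesis using E3 by simp
  qed
  define y where "y = map tm [a..<a+m]"
  define v where "v = map tm [a+m..<a+p]"
  have pm: "m \<le> p" using mK by (simp add: p_def)
  have lens: "length y = m" "length (y@v) = p" using pm by (simp_all add: y_def v_def)
  have "y @ v @ y = map tm [a..<a+p+m]"
  proof -
    have "map tm [a..<a+p+m] = map tm [a..<a+p] @ map tm [a+p..<a+p+m]"
      using upt_add_eq_append[of a "a+p" m] by simp
    moreover have "map tm [a..<a+p] = y @ v" using pm
      using upt_add_eq_append[of a "a+m" "p-m"] by (simp add: y_def v_def)
    moreover have "map tm [a+p..<a+p+m] = y"
      unfolding y_def by (rule nth_equalityI) (use per mK in auto)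
    ultimately show ?thesis by simp
  qed
  then have tf: "tm_factor (y@v@y)" unfolding tm_factor_def using lens by (intro exI[of _ a]) (simp add: add.assoc)
  have nd: "\<not> (2::int) ^ (K + 1) dvd int p"
  proof
    assume "(2::int) ^ (K + 1) dvd int p"
    then have "(2::int)*2^K dvd 9*2^K" by (simp add: p_def)
    then have "(2::int) dvd 9" using dvd_mult_cancel_right[of 2 "2^K" 9] by simp
    then show False by simp
  qed
  show "\<exists>y v. binary_word y \<and> binary_word v \<and> tm_factor (y @ v @ y) \<and> length y = m
            \<and> \<not> (2::int) ^ (nat (delta m) + 1) dvd int (length (y @ v))"
  proof (intro exI conjI)
    show "binary_word y" unfolding y_def by (rule bin_map_tm)
    show "binary_word v" unfolding v_def by (rule bin_map_tm)
    show "tm_factor (y@v@y)" by (fact tf)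
    show "length y = m" by (fact lens(1))
    show "\<not> (2::int) ^ (nat (delta m) + 1) dvd int (length (y @ v))"
      using nd lens(2) unfolding K_def by simp
  qed
qed

end
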